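(* For $1\leq p <\infty$, the space $L^{p}(\mu)$ contains an isometric and complemented copy of $\ell^{p}(\mathfrak c,L^{p}[0,1])$.
   Context: Let $\mathcal{B}$ be the Borel $\sigma$-algebra of $\mathbb{R}$, $\lambda$ the Lebesgue measure, and $\mathcal{B}_{\infty}$ the $\sigma$-algebra on $\mathbb{R}^{\mathbb{N}}$ generated by the cylinder sets $\prod_{i=1}^{m}C_{i}\times\prod_{i=m+1}^{\infty}\mathbb{R}$ with $C_i\in\mathcal{B}$, $m\in\mathbb{N}$. Let $\mathcal{F}(\mathcal{B},\lambda)$ be the set of finite rectangles $\prod_{i\in\mathbb{N}}C_{i}$ with $C_i\in\mathcal{B}$ and $\prod_{i}\lambda(C_i)\in[0,\infty)$, with $\mathrm{vol}(\prod_{i}C_i):=\prod_i\lambda(C_i)$. The measure $\mu$ is the restriction to $\mathcal{B}_{\infty}$ of the outer measure $\mu^{\ast}(A):=\inf\{\sum_{n}\mathrm{vol}(\mathscr{C}_{n}) : \mathscr{C}_{n}\in\mathcal{F}(\mathcal{B},\lambda),\ A\subset\bigcup_{n}\mathscr{C}_{n}\}$ ($\inf\varnothing=\infty$). $\ell^{p}(\kappa,X)$ denotes the $\ell^p$-sum of $\kappa$ copies of the Banach space $X$, and $\mathfrak{c}$ is the cardinality of the continuum. No set-theoretic hypothesis beyond ZFC is assumed. *)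

theory Defs
  imports "HOL-Analysis.Analysis"
begin

definition cyl_sets :: "(nat \<Rightarrow> real) set set" where
  "cyl_sets = {{x. \<forall>i<m. x i \<in> C i} | m C. \<forall>i. C i \<in> sets borel}"

definition B_inf :: "(nat \<Rightarrow> real) set set" where
  "B_inf = sigma_sets UNIV cyl_sets"

definition rect :: "(nat \<Rightarrow> real set) \<Rightarrow> (nat \<Rightarrow> real) set" where
  "rect C = {x. \<forall>i. x i \<in> C i}"

text \<open>Partial products of Lebesgue measures (in [0,\<infinity>], with 0 * \<infinity> = 0).\<close>
definition partial_vol :: "(nat \<Rightarrow> real set) \<Rightarrow> nat \<Rightarrow> ennreal" where
  "partial_vol C n = (\<Prod>i<n. emeasure lborel (C i))"

definition finite_rect :: "(nat \<Rightarrow> real set) \<Rightarrow> bool" where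
  "finite_rect C \<longleftrightarrow> (\<forall>i. C i \<in> sets borel) \<and> convergent (partial_vol C)
      \<and> lim (partial_vol C) \<noteq> \<infinity>"

definition vol :: "(nat \<Rightarrow> real set) \<Rightarrow> ennreal" where
  "vol C = lim (partial_vol C)"

text \<open>The outer measure mu^* (Inf of the empty set is \<infinity> in ennreal).\<close>
definition mu_outer :: "(nat \<Rightarrow> real) set \<Rightarrow> ennreal" where
  "mu_outer A = Inf {\<Sum>n. vol (R n) | R. (\<forall>n. finite_rect (R n)) \<and> A \<subseteq> (\<Union>n. rect (R n))}"

definition mu :: "(nat \<Rightarrow> real) measure" where
  "mu = measure_of UNIV B_inf mu_outer"

definition Lp :: "'a measure \<Rightarrow> real \<Rightarrow> ('a \<Rightarrow> real) set" where
  "Lp M p = {f \<in> borel_measurable M. integrable M (\<lambda>x. \<bar>f x\<bar> powr p)}"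

definition Lp_norm :: "'a measure \<Rightarrow> real \<Rightarrow> ('a \<Rightarrow> real) \<Rightarrow> real" where
  "Lp_norm M p f = (\<integral>x. \<bar>f x\<bar> powr p \<partial>M) powr (1 / p)"

definition I01 :: "real measure" where
  "I01 = restrict_space lborel {0..1}"

definition lp_sum :: "'a measure \<Rightarrow> real \<Rightarrow> ('i \<Rightarrow> 'a \<Rightarrow> real) set" where
  "lp_sum M p = {g. (\<forall>i. g i \<in> Lp M p) \<and> (\<lambda>i. Lp_norm M p (g i) powr p) summable_on UNIV}"

definition lp_sum_norm :: "'a measure \<Rightarrow> real \<Rightarrow> ('i \<Rightarrow> 'a \<Rightarrow> real) \<Rightarrow> real" where
  "lp_sum_norm M p g = (\<Sum>\<^sub>\<infinity>i. Lp_norm M p (g i) powr p) powr (1 / p)"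

end

theory Submission
  imports Defs "HOL-Probability.Probability"
begin
lemma partial_vol_Suc: "partial_vol C (Suc n) = partial_vol C n * emeasure lborel (C n)"
  by (simp add: partial_vol_def mult.commute)

lemma finite_rect_lim: "finite_rect C \<Longrightarrow> partial_vol C \<longlonglongrightarrow> vol C"
  unfolding finite_rect_def vol_def by (simp add: convergent_LIMSEQ_iff)

lemma finite_rectI:
  assumes "\<And>i. C i \<in> sets borel" "partial_vol C \<longlonglongrightarrow> L" "L \<noteq> \<infinity>"
  shows "finite_rect C" "vol C = L"
  using assms unfolding finite_rect_def vol_def
  by (auto simp: convergent_def limI)

lemma finite_rect_empty: "finite_rect (\<lambda>_. {})" "vol (\<lambda>_. {}) = 0"
proof -
  have "partial_vol (\<lambda>_. {}) \<longlonglongrightarrow> 0"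
    by (rule LIMSEQ_offset[where k=1]) (simp add: partial_vol_def)
  then show "finite_rect (\<lambda>_. {})" "vol (\<lambda>_. {}) = 0"
    using finite_rectI[of "\<lambda>_. {}" 0] by auto
qed

lemma finite_rect_cube:
  fixes c :: "nat \<Rightarrow> real"
  shows "finite_rect (\<lambda>i. {c i..c i + 1})" "vol (\<lambda>i. {c i..c i + 1}) = 1"
proof -
  have "partial_vol (\<lambda>i. {c i..c i + 1}) = (\<lambda>_. 1)"
    by (simp add: partial_vol_def fun_eq_iff)
  then show "finite_rect (\<lambda>i. {c i..c i + 1})" "vol (\<lambda>i. {c i..c i + 1}) = 1"
    using finite_rectI[of "\<lambda>i. {c i..c i + 1}" 1] by auto
qed

lemma pv_upd:
  assumes "n > j"
  shows "partial_vol (C(j:=Y)) n = emeasure lborel Y * (\<Prod>i\<in>{..<n}-{j}. emeasure lborel (C i))"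
proof -
  have "partial_vol (C(j:=Y)) n = (\<Prod>i\<in>insert j ({..<n}-{j}). emeasure lborel ((C(j:=Y)) i))"
    unfolding partial_vol_def using assms by (intro prod.cong) auto
  also have "\<dots> = emeasure lborel Y * (\<Prod>i\<in>{..<n}-{j}. emeasure lborel (C i))"
    by (subst prod.insert) (auto intro!: prod.cong)
  finally show ?thesis .
qed

lemma pv_self: "n > j \<Longrightarrow> partial_vol C n = emeasure lborel (C j) * (\<Prod>i\<in>{..<n}-{j}. emeasure lborel (C i))"
  using pv_upd[of j n C "C j"] by simp

lemma lim_eventually_eq:
  fixes f g :: "nat \<Rightarrow> ennreal"
  assumes "f \<longlonglongrightarrow> L" "\<And>n. n > j \<Longrightarrow> f n = g n"
  shows "g \<longlonglongrightarrow> L"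
proof -
  have "eventually (\<lambda>n. f n = g n) sequentially"
    using assms(2) by (auto simp: eventually_sequentially intro!: exI[of _ "Suc j"])
  then show ?thesis using assms(1) by (rule Lim_transform_eventually[rotated])
qed

lemma upd_conv:
  assumes C: "finite_rect C" and X: "emeasure lborel X \<le> emeasure lborel (C j)"
  shows "\<exists>L. partial_vol (C(j:=X)) \<longlonglongrightarrow> L \<and> L \<noteq> \<infinity>"
proof -
  define a where "a n = (\<Prod>i\<in>{..<n}-{j}. emeasure lborel (C i))" for n
  have pv: "partial_vol (C(j:=X)) n = emeasure lborel X * a n" if "n > j" for n
    using pv_upd[OF that] by (simp add: a_def)
  have pvC: "partial_vol C n = emeasure lborel (C j) * a n" if "n > j" for n
    using pv_self[OF that] by (simp add: a_def)
  have lim: "partial_vol C \<longlonglongrightarrow> vol C" and fin: "vol C \<noteq> \<infinity>"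
    using C finite_rect_lim by (auto simp: finite_rect_def vol_def)
  show ?thesis
  proof (cases "emeasure lborel (C j) = 0")
    case True
    then have "emeasure lborel X = 0" using X by simp
    then have "(\<lambda>_. 0) \<longlonglongrightarrow> (0::ennreal)" "\<And>n. n > j \<Longrightarrow> 0 = partial_vol (C(j:=X)) n"
      using pv by auto
    then have "partial_vol (C(j:=X)) \<longlonglongrightarrow> 0"
      by (rule lim_eventually_eq)
    then show ?thesis by auto
  next
    case nz: False
    show ?thesis
    proof (cases "emeasure lborel (C j) = \<infinity>")
      case True
      have "vol C < \<infinity>" using fin by (simp add: less_top)
      with lim have "eventually (\<lambda>n. partial_vol C n < \<infinity>) sequentially"
        by (rule order_tendstoD(2))
      then obtain N where N: "\<And>n. n \<ge> N \<Longrightarrow> partial_vol C n < \<infinity>"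
        by (auto simp: eventually_sequentially)
      have "a n = 0" if "n > N + j" for n
      proof -
        have "partial_vol C n < \<infinity>" using N that by auto
        moreover have "partial_vol C n = \<infinity> * a n" using pvC[of n] that True by simp
        ultimately show ?thesis by (cases "a n = 0") (auto simp: ennreal_mult_eq_top_iff)
      qed
      then have "(\<lambda>_. 0) \<longlonglongrightarrow> (0::ennreal)" "\<And>n. n > N + j \<Longrightarrow> 0 = partial_vol (C(j:=X)) n"
        using pv by auto
      then have "partial_vol (C(j:=X)) \<longlonglongrightarrow> 0"
        by (rule lim_eventually_eq)
      then show ?thesis by auto
    next
      case False
      define c where "c = emeasure lborel (C j)"
      have c: "c \<noteq> 0" "c \<noteq> \<infinity>" using nz False by (auto simp: c_def)
      have lX: "emeasure lborel X < top" using X c by (auto simp: c_def top_unique less_top[symmetric])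
      have ic: "inverse c < top" using c(1) by (simp add: less_top[symmetric])
      have "(\<lambda>n. inverse c * partial_vol C n) \<longlonglongrightarrow> inverse c * vol C"
        using ic lim by (rule ennreal_tendsto_cmult)
      then have "(\<lambda>n. emeasure lborel X * (inverse c * partial_vol C n)) \<longlonglongrightarrow> emeasure lborel X * (inverse c * vol C)"
        using lX by (rule ennreal_tendsto_cmult[rotated])
      moreover have "emeasure lborel X * (inverse c * partial_vol C n) = partial_vol (C(j:=X)) n" if "n > j" for n
      proof -
        have "inverse c * partial_vol C n = (a n * c) / c"
          using pvC[OF that] unfolding c_def divide_ennreal_def by (simp only: mult.commute)
        also have "\<dots> = a n" using c ennreal_mult_divide_eq[of c "a n"] by simp
        finally show ?thesis using pv[OF that] by simp
      qed
      ultimately have "partial_vol (C(j:=X)) \<longlonglongrightarrow> emeasure lborel X * (inverse c * vol C)"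
        by (rule lim_eventually_eq)
      moreover have "emeasure lborel X * (inverse c * vol C) \<noteq> \<infinity>"
        using c fin lX ic by (simp add: ennreal_mult_eq_top_iff)
      ultimately show ?thesis by auto
    qed
  qed
qed

lemma finite_rect_upd:
  assumes C: "finite_rect C" and X: "X \<in> sets borel" "X \<subseteq> C j"
  shows "finite_rect (C(j := X))"
proof -
  have "C j \<in> sets borel" using C by (auto simp: finite_rect_def)
  then have "emeasure lborel X \<le> emeasure lborel (C j)"
    using X by (intro emeasure_mono) auto
  from upd_conv[OF C this] obtain L where "partial_vol (C(j:=X)) \<longlonglongrightarrow> L" "L \<noteq> \<infinity>" by auto
  then show ?thesis using C X finite_rectI(1)[of "C(j:=X)" L] by (auto simp: finite_rect_def)
qed

lemma vol_split:
  assumes C: "finite_rect C" and X: "X \<in> sets borel" "Y \<in> sets borel" "X \<inter> Y = {}" "X \<union> Y = C j"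
  shows "vol (C(j:=X)) + vol (C(j:=Y)) = vol C"
proof -
  have fX: "finite_rect (C(j:=X))" and fY: "finite_rect (C(j:=Y))"
    using X by (auto intro!: finite_rect_upd[OF C])
  have "(\<lambda>n. partial_vol (C(j:=X)) n + partial_vol (C(j:=Y)) n) \<longlonglongrightarrow> vol (C(j:=X)) + vol (C(j:=Y))"
    using fX fY by (intro tendsto_add finite_rect_lim)
  moreover have "partial_vol (C(j:=X)) n + partial_vol (C(j:=Y)) n = partial_vol C n" if "n > j" for n
  proof -
    have "emeasure lborel (C j) = emeasure lborel X + emeasure lborel Y"
      using X by (metis plus_emeasure sets_lborel)
    then show ?thesis using pv_upd[OF that] pv_self[OF that] by (simp add: distrib_right)
  qed
  ultimately have "partial_vol C \<longlonglongrightarrow> vol (C(j:=X)) + vol (C(j:=Y))"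
    by (rule lim_eventually_eq)
  then show ?thesis using C finite_rect_lim LIMSEQ_unique by blast
qed

definition covers :: "(nat \<Rightarrow> real) set \<Rightarrow> (nat \<Rightarrow> nat \<Rightarrow> real set) \<Rightarrow> bool" where
  "covers A R \<longleftrightarrow> (\<forall>n. finite_rect (R n)) \<and> A \<subseteq> (\<Union>n. rect (R n))"

lemma mu_outer_alt: "mu_outer A = (INF R\<in>{R. covers A R}. \<Sum>n. vol (R n))"
  unfolding mu_outer_def covers_def by (simp add: image_def) (metis (no_types, lifting))

lemma mu_outer_le: "covers A R \<Longrightarrow> mu_outer A \<le> (\<Sum>n. vol (R n))"
  unfolding mu_outer_alt by (rule INF_lower) auto

lemma mu_outer_ge: "(\<And>R. covers A R \<Longrightarrow> x \<le> (\<Sum>n. vol (R n))) \<Longrightarrow> x \<le> mu_outer A"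
  unfolding mu_outer_alt by (rule INF_greatest) auto

lemma mu_outer_close: "mu_outer A < e \<Longrightarrow> \<exists>R. covers A R \<and> (\<Sum>n. vol (R n)) < e"
  unfolding mu_outer_alt INF_less_iff by auto

lemma mu_outer_empty: "mu_outer {} = 0"
proof -
  have "covers {} (\<lambda>_ _. {})" using finite_rect_empty by (auto simp: covers_def)
  from mu_outer_le[OF this] show ?thesis using finite_rect_empty by simp
qed

lemma mu_outer_mono: "A \<subseteq> B \<Longrightarrow> mu_outer A \<le> mu_outer B"
  by (rule mu_outer_ge, rule mu_outer_le) (auto simp: covers_def)

lemma mu_outer_subadd: "mu_outer (\<Union>i. A i) \<le> (\<Sum>n. mu_outer (A n))"
proof (rule ennreal_le_epsilon)
  fix e :: real assume "0 < e" "(\<Sum>n. mu_outer (A n)) < top"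
  then have *: "\<And>n. mu_outer (A n) < mu_outer (A n) + e * (1/2)^Suc n"
    by (auto simp add: less_top dest!: ennreal_suminf_lessD)
  obtain B where B: "\<And>n. covers (A n) (B n)"
      and Ble: "\<And>n. (\<Sum>i. vol (B n i)) \<le> mu_outer (A n) + e * (1/2)^(Suc n)"
    by (metis less_imp_le mu_outer_close[OF *])
  define C where "C = case_prod B o prod_decode"
  have C: "covers (\<Union>i. A i) C"
    using B unfolding covers_def C_def
    by (auto simp: subset_eq split: prod.splits) (metis prod.case prod_encode_inverse)+
  have "mu_outer (\<Union>i. A i) \<le> (\<Sum>i. vol (C i))"
    using C by (rule mu_outer_le)
  also have "\<dots> = (\<Sum>n. \<Sum>i. vol (B n i))"
    unfolding C_def comp_def by (intro suminf_ennreal_2dimen) auto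
  also have "\<dots> \<le> (\<Sum>n. mu_outer (A n) + e * (1/2) ^ Suc n)"
    by (intro suminf_le Ble) auto
  also have "... = (\<Sum>n. mu_outer (A n)) + (\<Sum>n. ennreal e * ennreal ((1/2) ^ Suc n))"
    using \<open>0 < e\<close> by (subst suminf_add[symmetric])
                     (auto simp del: ennreal_suminf_cmult simp add: ennreal_mult[symmetric])
  also have "\<dots> = (\<Sum>n. mu_outer (A n)) + e"
    unfolding ennreal_suminf_cmult
    by (subst suminf_ennreal_eq[OF zero_le_power power_half_series]) auto
  finally show "mu_outer (\<Union>i. A i) \<le> (\<Sum>n. mu_outer (A n)) + e" .
qed

lemma outer_mu: "outer_measure_space (Pow UNIV) mu_outer"
  unfolding outer_measure_space_def positive_def increasing_def countably_subadditive_def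
  using mu_outer_empty mu_outer_mono mu_outer_subadd by auto

lemma mu_outer_Un: "mu_outer (A \<union> B) \<le> mu_outer A + mu_outer B"
proof -
  have "mu_outer (\<Union>i. binaryset A B i) \<le> (\<Sum>n. mu_outer (binaryset A B n))"
    by (rule mu_outer_subadd)
  then show ?thesis
    by (simp add: UN_binaryset_eq suminf_binaryset_eq mu_outer_empty)
qed

lemma rect_upd: "X \<subseteq> C j \<Longrightarrow> rect (C(j:=X)) = rect C \<inter> {x. x j \<in> X}"
  unfolding rect_def by auto

lemma lambda_coord:
  assumes B: "B \<in> sets borel"
  shows "{x. x j \<in> B} \<in> lambda_system UNIV (Pow UNIV) mu_outer"
proof -
  let ?Z = "{x::nat\<Rightarrow>real. x j \<in> B}"
  have "mu_outer (?Z \<inter> A) + mu_outer ((UNIV - ?Z) \<inter> A) = mu_outer A" for A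
  proof (rule antisym)
    show "mu_outer A \<le> mu_outer (?Z \<inter> A) + mu_outer ((UNIV - ?Z) \<inter> A)"
    proof -
      have "A = (?Z \<inter> A) \<union> ((UNIV - ?Z) \<inter> A)" by blast
      then have "mu_outer A = mu_outer ((?Z \<inter> A) \<union> ((UNIV - ?Z) \<inter> A))" by simp
      also have "\<dots> \<le> mu_outer (?Z \<inter> A) + mu_outer ((UNIV - ?Z) \<inter> A)" by (rule mu_outer_Un)
      finally show ?thesis .
    qed
    show "mu_outer (?Z \<inter> A) + mu_outer ((UNIV - ?Z) \<inter> A) \<le> mu_outer A"
    proof (rule mu_outer_ge)
      fix R assume R: "covers A R"
      define D where "D n = (R n)(j := R n j \<inter> B)" for n
      define E where "E n = (R n)(j := R n j - B)" for n
      have Rb: "R n j \<in> sets borel" for n using R by (auto simp: covers_def finite_rect_def)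
      have rD: "rect (D n) = rect (R n) \<inter> {x. x j \<in> R n j \<inter> B}" for n
        unfolding D_def by (rule rect_upd) auto
      have rE: "rect (E n) = rect (R n) \<inter> {x. x j \<in> R n j - B}" for n
        unfolding E_def by (rule rect_upd) auto
      have inR: "x \<in> rect (R n) \<Longrightarrow> x j \<in> R n j" for x n by (simp add: rect_def)
      have "covers (?Z \<inter> A) D"
        unfolding covers_def
      proof
        show "\<forall>n. finite_rect (D n)" using R B Rb by (auto simp: D_def covers_def intro!: finite_rect_upd)
        show "?Z \<inter> A \<subseteq> (\<Union>n. rect (D n))" using R rD inR unfolding covers_def by blast
      qed
      then have 1: "mu_outer (?Z \<inter> A) \<le> (\<Sum>n. vol (D n))" by (rule mu_outer_le)
      have "covers ((UNIV - ?Z) \<inter> A) E"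
        unfolding covers_def
      proof
        show "\<forall>n. finite_rect (E n)" using R B Rb by (auto simp: E_def covers_def intro!: finite_rect_upd)
        show "(UNIV - ?Z) \<inter> A \<subseteq> (\<Union>n. rect (E n))" using R rE inR unfolding covers_def by blast
      qed
      then have 2: "mu_outer ((UNIV - ?Z) \<inter> A) \<le> (\<Sum>n. vol (E n))" by (rule mu_outer_le)
      have "vol (D n) + vol (E n) = vol (R n)" for n
        unfolding D_def E_def using R B Rb by (intro vol_split) (auto simp: covers_def)
      then have "(\<Sum>n. vol (D n)) + (\<Sum>n. vol (E n)) = (\<Sum>n. vol (R n))"
        by (subst suminf_add) auto
      then show "mu_outer (?Z \<inter> A) + mu_outer ((UNIV - ?Z) \<inter> A) \<le> (\<Sum>n. vol (R n))"
        using 1 2 by (metis add_mono)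
    qed
  qed
  then show ?thesis unfolding lambda_system_def by auto
qed

lemma B_inf_sub_lambda: "B_inf \<subseteq> lambda_system UNIV (Pow UNIV) mu_outer"
proof -
  interpret L: sigma_algebra UNIV "lambda_system UNIV (Pow UNIV) mu_outer"
    using sigma_algebra.caratheodory_lemma[OF sigma_algebra_Pow outer_mu] by (simp add: measure_space_def)
  have "cyl_sets \<subseteq> lambda_system UNIV (Pow UNIV) mu_outer"
  proof
    fix Z assume "Z \<in> cyl_sets"
    then obtain m C where Z: "Z = {x. \<forall>i<m. x i \<in> C i}" and C: "\<And>i. C i \<in> sets borel"
      unfolding cyl_sets_def by auto
    have "{x. \<forall>i<k. x i \<in> C i} \<in> lambda_system UNIV (Pow UNIV) mu_outer" for k
    proof (induction k)
      case 0 then show ?case using L.top by simp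
    next
      case (Suc k)
      have "{x. \<forall>i<Suc k. x i \<in> C i} = {x. \<forall>i<k. x i \<in> C i} \<inter> {x. x k \<in> C k}"
        by (auto simp: less_Suc_eq)
      then show ?case using L.Int[OF Suc.IH lambda_coord[OF C]] by simp
    qed
    then show "Z \<in> lambda_system UNIV (Pow UNIV) mu_outer" unfolding Z .
  qed
  then show ?thesis unfolding B_inf_def
    by (rule L.sigma_sets_subset)
qed

lemma measure_space_mu: "measure_space UNIV B_inf mu_outer"
proof (rule measure_down)
  show "measure_space UNIV (lambda_system UNIV (Pow UNIV) mu_outer) mu_outer"
    using sigma_algebra.caratheodory_lemma[OF sigma_algebra_Pow outer_mu] by simp
  show "sigma_algebra UNIV B_inf" unfolding B_inf_def by (rule sigma_algebra_sigma_sets) auto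
qed (rule B_inf_sub_lambda)

lemma sets_mu: "sets mu = B_inf"
  unfolding mu_def B_inf_def
  by (simp add: sets_measure_of_conv sigma_sets_sigma_sets_eq)

lemma space_mu: "space mu = UNIV"
  unfolding mu_def by simp

lemma emeasure_mu: "A \<in> B_inf \<Longrightarrow> emeasure mu A = mu_outer A"
  using measure_space_mu unfolding mu_def measure_space_def
  by (intro emeasure_measure_of_sigma) auto

lemma sets_mu_PiM: "sets mu = sets (PiM UNIV (\<lambda>_::nat. lborel::real measure))"
proof -
  have "sets (PiM UNIV (\<lambda>_::nat. lborel::real measure)) =
      sigma_sets UNIV {{f::nat\<Rightarrow>real. f i \<in> A} | i A. A \<in> sets borel}"
    by (subst sets_PiM_single) (simp add: PiE_UNIV_domain)
  also have "\<dots> = B_inf" unfolding B_inf_def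
  proof (rule sigma_sets_eqI)
    fix a assume "a \<in> {{f::nat\<Rightarrow>real. f i \<in> A} | i A. A \<in> sets borel}"
    then obtain i A where a: "a = {f. f i \<in> A}" and A: "A \<in> sets borel" by auto
    have "a = {x. \<forall>k<Suc i. x k \<in> (if k = i then A else UNIV)}"
      unfolding a by (auto simp: less_Suc_eq)
    moreover have "\<forall>k. (if k = i then A else UNIV) \<in> sets borel" using A by auto
    ultimately have "a \<in> cyl_sets" unfolding cyl_sets_def
      by (intro CollectI exI[of _ "Suc i"] exI[of _ "\<lambda>k. if k = i then A else UNIV"]) simp
    then show "a \<in> sigma_sets UNIV cyl_sets" by (rule sigma_sets.Basic)
  next
    fix b assume "b \<in> cyl_sets"
    then obtain m C where b: "b = {x. \<forall>i<m. x i \<in> C i}" and C: "\<And>i. C i \<in> sets borel"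
      unfolding cyl_sets_def by auto
    let ?G = "{{f::nat\<Rightarrow>real. f i \<in> A} | i A. A \<in> sets borel}"
    interpret G: sigma_algebra UNIV "sigma_sets UNIV ?G"
      by (rule sigma_algebra_sigma_sets) auto
    have "{x. \<forall>i<k. x i \<in> C i} \<in> sigma_sets UNIV ?G" for k
    proof (induction k)
      case 0 then show ?case using G.top by simp
    next
      case (Suc k)
      have "{x. \<forall>i<Suc k. x i \<in> C i} = {x. \<forall>i<k. x i \<in> C i} \<inter> {x. x k \<in> C k}"
        by (auto simp: less_Suc_eq)
      moreover have "{x::nat\<Rightarrow>real. x k \<in> C k} \<in> sigma_sets UNIV ?G"
        using C by (intro sigma_sets.Basic CollectI exI[of _ k] exI[of _ "C k"]) simp
      ultimately show ?case using G.Int[OF Suc.IH] by simp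
    qed
    then show "b \<in> sigma_sets UNIV ?G" unfolding b .
  qed
  finally show ?thesis by (simp add: sets_mu)
qed

lemma measurable_mu_coord[measurable]: "(\<lambda>x. x i) \<in> borel_measurable mu"
  by (subst measurable_cong_sets[OF sets_mu_PiM refl]) simp

lemma sets_mu_coord[measurable]: "B \<in> sets borel \<Longrightarrow> {x. x i \<in> B} \<in> sets mu"
  using measurable_sets[OF measurable_mu_coord[of i], of B] by (simp add: space_mu vimage_def)

lemma rect_sets_mu: "(\<And>i. C i \<in> sets borel) \<Longrightarrow> rect C \<in> sets mu"
proof -
  assume C: "\<And>i. C i \<in> sets borel"
  have "rect C = (\<Inter>i. {x. x i \<in> C i})" by (auto simp: rect_def)
  also have "\<dots> \<in> sets mu" using C by (intro sets.countable_INT) auto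
  finally show ?thesis .
qed

lemma measurable_into_mu:
  assumes "\<And>i. (\<lambda>y. f y i) \<in> borel_measurable N"
  shows "f \<in> measurable N mu"
proof -
  have "(\<lambda>y i. f y i) \<in> measurable N (PiM UNIV (\<lambda>_::nat. lborel::real measure))"
    using assms by (intro measurable_PiM_single') (auto simp: PiE_UNIV_domain)
  then show ?thesis
    by (subst measurable_cong_sets[OF refl sets_mu_PiM]) simp
qed

definition PP :: "(nat \<Rightarrow> real) measure" where
  "PP = PiM UNIV (\<lambda>_. I01)"

definition tau :: "(nat \<Rightarrow> real) \<Rightarrow> (nat \<Rightarrow> real) \<Rightarrow> (nat \<Rightarrow> real)" where
  "tau c y = (\<lambda>i. y i + c i)"

definition cube :: "(nat \<Rightarrow> real) \<Rightarrow> (nat \<Rightarrow> real) set" where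
  "cube c = rect (\<lambda>i. {c i..c i + 1})"

lemma space_I01: "space I01 = {0..1}"
  by (simp add: I01_def)

lemma prob_I01: "prob_space I01"
  unfolding I01_def by (rule prob_spaceI) (simp add: emeasure_restrict_space space_restrict_space)

interpretation I01: prob_space I01 by (rule prob_I01)

lemma seq_I01: "sequence_space I01"
  by (simp add: sequence_space_def product_prob_space_def product_prob_space_axioms_def
    product_sigma_finite_def prob_I01 prob_space_imp_sigma_finite)

lemma PP_prob: "prob_space PP"
  unfolding PP_def by (intro prob_space_PiM prob_I01)

lemma space_PP: "space PP = {y. \<forall>i. y i \<in> {0..1}}"
  by (auto simp: PP_def space_PiM space_I01 PiE_iff)

lemma measurable_I01_borel[measurable]: "(\<lambda>s. s) \<in> borel_measurable I01"
  unfolding I01_def by (rule measurable_restrict_space1) simp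

lemma measurable_PP_coord[measurable]: "(\<lambda>y. y i) \<in> borel_measurable PP"
proof -
  have "(\<lambda>y. y i) \<in> measurable PP I01"
    unfolding PP_def by (rule measurable_component_singleton) simp
  then show ?thesis using measurable_I01_borel by (rule measurable_compose)
qed

lemma tau_meas[measurable]: "tau c \<in> measurable PP mu"
  unfolding tau_def by (rule measurable_into_mu) simp

lemma tau_cube: "y \<in> space PP \<Longrightarrow> tau c y \<in> cube c"
  by (auto simp: space_PP tau_def cube_def rect_def)

lemma cube_sets[measurable]: "cube c \<in> sets mu"
  unfolding cube_def by (rule rect_sets_mu) simp

lemma lborel_shift_le:
  fixes a :: real
  assumes "C \<in> sets borel"
  shows "emeasure lborel {s. s + a \<in> C} = emeasure lborel C"
proof -
  have "emeasure lborel C = emeasure (distr lborel borel ((+) a)) C"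
    by (simp add: lborel_distr_plus)
  also have "\<dots> = emeasure lborel ((+) a -` C \<inter> space lborel)"
    using assms by (intro emeasure_distr) auto
  also have "(+) a -` C \<inter> space lborel = {s. s + a \<in> C}" by (auto simp: add.commute)
  finally show ?thesis by simp
qed

lemma emeasure_I01: "X \<in> sets borel \<Longrightarrow> X \<subseteq> {0..1} \<Longrightarrow> emeasure I01 X = emeasure lborel X"
  unfolding I01_def by (intro emeasure_restrict_space) auto

lemma PP_rect_le:
  assumes C: "finite_rect C"
  shows "emeasure PP (tau c -` rect C \<inter> space PP) \<le> vol C"
proof (rule LIMSEQ_le_const[OF finite_rect_lim[OF C]], intro exI allI impI)
  fix m :: nat
  have Cb: "C i \<in> sets borel" for i using C by (auto simp: finite_rect_def)
  define X where "X i = (\<lambda>s. s + c i) -` C i \<inter> space I01" for i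
  have Xs: "X i \<in> sets I01" for i
  proof -
    have "(\<lambda>s. s + c i) \<in> borel_measurable I01" by measurable
    then show ?thesis unfolding X_def using Cb by (rule measurable_sets)
  qed
  define E where "E = prod_emb UNIV (\<lambda>_. I01) {..<m} (PiE {..<m} X)"
  have "tau c -` rect C \<inter> space PP \<subseteq> E"
    by (auto simp: E_def prod_emb_def X_def tau_def rect_def PP_def space_I01 space_PiM PiE_iff)
  then have "emeasure PP (tau c -` rect C \<inter> space PP) \<le> emeasure PP E"
    using Xs unfolding PP_def E_def by (intro emeasure_mono sets_PiM_I) auto
  also have "emeasure PP E = (\<Prod>i<m. emeasure I01 (X i))"
    unfolding PP_def E_def using seq_I01 Xs
    by (subst product_prob_space.emeasure_PiM_emb) (auto simp: sequence_space_def)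
  also have "\<dots> \<le> (\<Prod>i<m. emeasure lborel (C i))"
  proof (rule prod_mono_ennreal)
    fix i
    have Xb: "X i \<in> sets borel" "X i \<subseteq> {0..1}"
      using Xs[of i] by (auto simp: I01_def sets_restrict_space space_restrict_space X_def)
    have "emeasure I01 (X i) = emeasure lborel (X i)" using Xb by (rule emeasure_I01)
    also have "\<dots> \<le> emeasure lborel {s. s + c i \<in> C i}"
      using Cb[of i] by (intro emeasure_mono) (auto simp: X_def)
    also have "\<dots> = emeasure lborel (C i)" using Cb by (rule lborel_shift_le)
    finally show "emeasure I01 (X i) \<le> emeasure lborel (C i)" .
  qed
  finally show "emeasure PP (tau c -` rect C \<inter> space PP) \<le> partial_vol C m"
    unfolding partial_vol_def .
qed


lemma PP_le_mu:
  assumes A: "A \<in> sets mu"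
  shows "emeasure PP (tau c -` A \<inter> space PP) \<le> emeasure mu (A \<inter> cube c)"
proof -
  have AQ: "A \<inter> cube c \<in> B_inf" using A cube_sets[of c] by (simp add: sets_mu[symmetric])
  have "emeasure PP (tau c -` A \<inter> space PP) \<le> mu_outer (A \<inter> cube c)"
  proof (rule mu_outer_ge)
    fix R assume R: "covers (A \<inter> cube c) R"
    have Rs: "rect (R n) \<in> sets mu" for n
      using R by (intro rect_sets_mu) (auto simp: covers_def finite_rect_def)
    have "tau c -` A \<inter> space PP \<subseteq> (\<Union>n. tau c -` rect (R n) \<inter> space PP)"
      using R tau_cube[of _ c] unfolding covers_def by blast
    then have "emeasure PP (tau c -` A \<inter> space PP) \<le> emeasure PP (\<Union>n. tau c -` rect (R n) \<inter> space PP)"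
      using Rs by (intro emeasure_mono) (auto intro!: sets.countable_UN measurable_sets[OF tau_meas])
    also have "\<dots> \<le> (\<Sum>n. emeasure PP (tau c -` rect (R n) \<inter> space PP))"
      using Rs by (intro emeasure_subadditive_countably) (auto intro!: measurable_sets[OF tau_meas])
    also have "\<dots> \<le> (\<Sum>n. vol (R n))"
      using R by (intro suminf_le PP_rect_le) (auto simp: covers_def)
    finally show "emeasure PP (tau c -` A \<inter> space PP) \<le> (\<Sum>n. vol (R n))" .
  qed
  then show ?thesis using emeasure_mu[OF AQ] by simp
qed

lemma mu_cube_le: "emeasure mu (cube c) \<le> 1"
proof -
  define R where "R n = (if n = 0 then (\<lambda>i. {c i..c i + 1}) else (\<lambda>_. {}))" for n :: nat
  have "covers (cube c) R"
    unfolding covers_def cube_def R_def using finite_rect_cube finite_rect_empty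
    by (auto intro!: exI[of _ 0])
  then have "mu_outer (cube c) \<le> (\<Sum>n. vol (R n))" by (rule mu_outer_le)
  also have "(\<Sum>n. vol (R n)) = 1"
    using finite_rect_cube finite_rect_empty by (subst suminf_finite[of "{0}"]) (auto simp: R_def)
  finally show ?thesis using emeasure_mu[of "cube c"] cube_sets[of c] by (simp add: sets_mu)
qed

lemma mu_eq_PP:
  assumes A: "A \<in> sets mu"
  shows "emeasure mu (A \<inter> cube c) = emeasure PP (tau c -` A \<inter> space PP)"
proof -
  interpret PP: prob_space PP by (rule PP_prob)
  have A': "UNIV - A \<in> sets mu" using A by (metis sets.compl_sets space_mu)
  define a where "a = emeasure mu (A \<inter> cube c)"
  define b where "b = emeasure mu ((UNIV - A) \<inter> cube c)"
  define a' where "a' = emeasure PP (tau c -` A \<inter> space PP)"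
  define b' where "b' = emeasure PP (tau c -` (UNIV - A) \<inter> space PP)"
  have 1: "a' \<le> a" "b' \<le> b" unfolding a_def a'_def b_def b'_def using A A' by (auto intro!: PP_le_mu)
  have "a + b = emeasure mu (cube c)"
    unfolding a_def b_def using A A' by (subst plus_emeasure) (auto intro!: arg_cong[where f="emeasure mu"])
  then have 2: "a + b \<le> 1" using mu_cube_le by simp
  have "a' + b' = emeasure PP (space PP)"
    unfolding a'_def b'_def using A A' measurable_sets[OF tau_meas]
    by (subst plus_emeasure) (auto intro!: arg_cong[where f="emeasure PP"])
  then have 3: "a' + b' = 1" by (simp add: PP.emeasure_space_1)
  have "b' \<noteq> top" using 3 by (metis ennreal_add_eq_top ennreal_one_neq_top)
  have "b' + a \<le> b' + a'" using 1 2 3 by (metis add_left_mono order_trans add.commute)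
  then have "a \<le> a'" using \<open>b' \<noteq> top\<close> by (simp add: ennreal_add_left_cancel_le)
  then show ?thesis using 1 unfolding a_def a'_def by simp
qed

lemma density_eq_distr: "density mu (indicator (cube c)) = distr PP mu (tau c)"
proof (rule measure_eqI)
  fix A assume "A \<in> sets (density mu (indicator (cube c)))"
  then have A: "A \<in> sets mu" by simp
  have "emeasure (density mu (indicator (cube c))) A = (\<integral>\<^sup>+x. indicator (cube c) x * indicator A x \<partial>mu)"
    using A by (subst emeasure_density) (auto intro!: nn_integral_cong)
  also have "\<dots> = (\<integral>\<^sup>+x. indicator (A \<inter> cube c) x \<partial>mu)"
    by (intro nn_integral_cong) (auto split: split_indicator)
  also have "\<dots> = emeasure mu (A \<inter> cube c)" using A by simp
  also have "\<dots> = emeasure (distr PP mu (tau c)) A"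
    using A by (simp add: mu_eq_PP emeasure_distr)
  finally show "emeasure (density mu (indicator (cube c))) A = emeasure (distr PP mu (tau c)) A" .
qed simp

lemma cube_integral:
  assumes F[measurable]: "F \<in> borel_measurable mu"
  shows "(\<integral>\<^sup>+x. indicator (cube c) x * F x \<partial>mu) = (\<integral>\<^sup>+y. F (tau c y) \<partial>PP)"
proof -
  have "(\<integral>\<^sup>+x. indicator (cube c) x * F x \<partial>mu) = (\<integral>\<^sup>+x. F x \<partial>density mu (indicator (cube c)))"
    by (subst nn_integral_density) auto
  also have "\<dots> = (\<integral>\<^sup>+y. F (tau c y) \<partial>PP)"
    by (simp add: density_eq_distr nn_integral_distr)
  finally show ?thesis .
qed

lemma powr_tangent:
  fixes p m y :: real
  assumes p: "p \<ge> 1" and m: "m \<ge> 0" and y: "y \<ge> 0"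
  shows "m powr p + p * m powr (p - 1) * (y - m) \<le> y powr p"
proof (cases "m = 0")
  case True then show ?thesis by simp
next
  case False
  then have m0: "m > 0" using m by simp
  show ?thesis
  proof (cases "y = 0")
    case True
    have "m powr (p - 1) * m = m powr p"
      using m0 powr_add[of m "p - 1" 1] by simp
    then have "m powr p + p * m powr (p - 1) * (y - m) = (1 - p) * m powr p"
      using True by (simp add: algebra_simps)
    also have "\<dots> \<le> 0" using p by (simp add: mult_nonpos_nonneg)
    finally show ?thesis using True by simp
  next
    case False
    then have y0: "y > 0" using y by simp
    have "(p * m powr (p - 1)) * (y - m) \<le> y powr p - m powr p"
    proof (rule f''_imp_f'[of "{0<..}" "\<lambda>x. x powr p" "\<lambda>x. p * x powr (p - 1)" "\<lambda>x. p * ((p - 1) * x powr (p - 1 - 1))"])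
      show "convex {0::real<..}" by simp
      show "\<And>x. x \<in> {0<..} \<Longrightarrow> ((\<lambda>x. x powr p) has_real_derivative p * x powr (p - 1)) (at x)"
        by (auto intro!: derivative_eq_intros)
      show "\<And>x. x \<in> {0<..} \<Longrightarrow> ((\<lambda>x. p * x powr (p - 1)) has_real_derivative p * ((p - 1) * x powr (p - 1 - 1))) (at x)"
        by (auto intro!: derivative_eq_intros)
      show "\<And>x. x \<in> {0<..} \<Longrightarrow> 0 \<le> p * ((p - 1) * x powr (p - 1 - 1))"
        using p by auto
    qed (use m0 y0 in auto)
    then show ?thesis by simp
  qed
qed

lemma (in prob_space) jensen_powr:
  fixes X :: "'a \<Rightarrow> real"
  assumes p: "p \<ge> 1" and X: "integrable M X" "\<And>x. X x \<ge> 0"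
    and Xp: "integrable M (\<lambda>x. X x powr p)"
  shows "(\<integral>x. X x \<partial>M) powr p \<le> (\<integral>x. X x powr p \<partial>M)"
proof -
  define m where "m = (\<integral>x. X x \<partial>M)"
  have m: "m \<ge> 0" unfolding m_def using X by simp
  have "(\<integral>x. m powr p + p * m powr (p - 1) * (X x - m) \<partial>M) \<le> (\<integral>x. X x powr p \<partial>M)"
    using X Xp m p by (intro integral_mono powr_tangent) auto
  also have "(\<integral>x. m powr p + p * m powr (p - 1) * (X x - m) \<partial>M) = m powr p + p * m powr (p - 1) * (m - m)"
    using X by (simp add: prob_space m_def)
  finally show ?thesis by (simp add: m_def)
qed

lemma abs_le_powr:
  fixes x p :: real
  assumes "p \<ge> 1"
  shows "\<bar>x\<bar> \<le> 1 + \<bar>x\<bar> powr p"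
proof (cases "\<bar>x\<bar> \<le> 1")
  case True then show ?thesis using powr_ge_zero[of "\<bar>x\<bar>" p] by linarith
next
  case False
  then have "\<bar>x\<bar> powr 1 \<le> \<bar>x\<bar> powr p" using assms by (intro powr_mono) auto
  then show ?thesis using False by simp
qed

lemma (in prob_space) integrable_of_powr:
  fixes F :: "'a \<Rightarrow> real"
  assumes p: "p \<ge> 1" and F[measurable]: "F \<in> borel_measurable M"
    and fin: "(\<integral>\<^sup>+x. ennreal (\<bar>F x\<bar> powr p) \<partial>M) < \<infinity>"
  shows "integrable M F" "integrable M (\<lambda>x. \<bar>F x\<bar> powr p)"
proof -
  show Fp: "integrable M (\<lambda>x. \<bar>F x\<bar> powr p)"
    using fin by (intro integrableI_bounded) auto
  show "integrable M F"
  proof (rule Bochner_Integration.integrable_bound)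
    show "integrable M (\<lambda>x. 1 + \<bar>F x\<bar> powr p)" using Fp by simp
    show "AE x in M. norm (F x) \<le> norm (1 + \<bar>F x\<bar> powr p)"
      using abs_le_powr[OF p] by auto
  qed simp
qed

lemma (in prob_space) jensen_nn:
  fixes F :: "'a \<Rightarrow> real"
  assumes p: "p \<ge> 1" and F[measurable]: "F \<in> borel_measurable M"
  shows "ennreal (\<bar>\<integral>x. F x \<partial>M\<bar> powr p) \<le> (\<integral>\<^sup>+x. ennreal (\<bar>F x\<bar> powr p) \<partial>M)"
proof (cases "(\<integral>\<^sup>+x. ennreal (\<bar>F x\<bar> powr p) \<partial>M) < \<infinity>")
  case False
  then have "(\<integral>\<^sup>+x. ennreal (\<bar>F x\<bar> powr p) \<partial>M) = top" by (simp add: less_top[symmetric])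
  then show ?thesis by simp
next
  case True
  note I = integrable_of_powr[OF p F True]
  have "\<bar>\<integral>x. F x \<partial>M\<bar> powr p \<le> (\<integral>x. \<bar>F x\<bar> \<partial>M) powr p"
    using p by (intro powr_mono2) (auto intro!: integral_abs_bound)
  also have "\<dots> \<le> (\<integral>x. \<bar>F x\<bar> powr p \<partial>M)"
    using I p by (intro jensen_powr) auto
  also have "ennreal \<dots> = (\<integral>\<^sup>+x. ennreal (\<bar>F x\<bar> powr p) \<partial>M)"
    using I by (intro nn_integral_eq_integral[symmetric]) auto
  finally show ?thesis using p by (auto intro: ennreal_leI order_trans)
qed

lemma PP_iter: "distr (I01 \<Otimes>\<^sub>M PP) PP (\<lambda>(s, \<omega>). case_nat s \<omega>) = PP"
  unfolding PP_def using sequence_space.PiM_iter[OF seq_I01] .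

lemma case_nat_meas[measurable]: "(\<lambda>(s, \<omega>). case_nat s \<omega>) \<in> measurable (I01 \<Otimes>\<^sub>M PP) PP"
  unfolding PP_def by measurable

lemma sf_PP: "sigma_finite_measure PP"
  using PP_prob by (rule prob_space_imp_sigma_finite)

lemma PP_iter_nn:
  assumes G[measurable]: "G \<in> borel_measurable PP"
  shows "(\<integral>\<^sup>+y. G y \<partial>PP) = (\<integral>\<^sup>+s. \<integral>\<^sup>+\<omega>. G (case_nat s \<omega>) \<partial>PP \<partial>I01)"
proof -
  have "(\<integral>\<^sup>+y. G y \<partial>PP) = (\<integral>\<^sup>+y. G y \<partial>distr (I01 \<Otimes>\<^sub>M PP) PP (\<lambda>(s, \<omega>). case_nat s \<omega>))"
    by (simp add: PP_iter)
  also have "\<dots> = (\<integral>\<^sup>+z. G (case_prod case_nat z) \<partial>(I01 \<Otimes>\<^sub>M PP))"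
    by (subst nn_integral_distr) auto
  also have "\<dots> = (\<integral>\<^sup>+s. \<integral>\<^sup>+\<omega>. G (case_nat s \<omega>) \<partial>PP \<partial>I01)"
    by (subst sigma_finite_measure.nn_integral_fst[OF sf_PP, symmetric]) auto
  finally show ?thesis .
qed

definition phi :: "(nat \<Rightarrow> real) \<Rightarrow> real \<Rightarrow> (nat \<Rightarrow> real) \<Rightarrow> (nat \<Rightarrow> real)" where
  "phi c s \<omega> = tau c (case_nat s \<omega>)"

lemma phi_meas[measurable]: "(\<lambda>(s, \<omega>). phi c s \<omega>) \<in> measurable (I01 \<Otimes>\<^sub>M PP) mu"
proof -
  have "(\<lambda>z. tau c (case_prod case_nat z)) \<in> measurable (I01 \<Otimes>\<^sub>M PP) mu"
    using case_nat_meas tau_meas by (rule measurable_compose)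
  then show ?thesis by (simp add: phi_def case_prod_beta')
qed

lemma KEY:
  assumes F[measurable]: "F \<in> borel_measurable mu"
  shows "(\<integral>\<^sup>+x. indicator (cube c) x * F x \<partial>mu) = (\<integral>\<^sup>+s. \<integral>\<^sup>+\<omega>. F (phi c s \<omega>) \<partial>PP \<partial>I01)"
proof -
  have "(\<lambda>y. F (tau c y)) \<in> borel_measurable PP"
    using tau_meas F by (rule measurable_compose)
  then show ?thesis unfolding cube_integral[OF F] phi_def by (rule PP_iter_nn)
qed

lemma case_nat_space: "s \<in> {0..1} \<Longrightarrow> \<omega> \<in> space PP \<Longrightarrow> case_nat s \<omega> \<in> space PP"
  by (auto simp: space_PP split: nat.split)

lemma phi_cube: "s \<in> {0..1} \<Longrightarrow> \<omega> \<in> space PP \<Longrightarrow> phi c s \<omega> \<in> cube c"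
  unfolding phi_def by (intro tau_cube case_nat_space)

lemma phi_0: "phi c s \<omega> 0 = s + c 0"
  by (simp add: phi_def tau_def)

definition cc :: "real \<Rightarrow> nat \<Rightarrow> real" where
  "cc t i = (if of_rat (from_nat i :: rat) < t then 2 else 0)"

definition Q :: "real \<Rightarrow> (nat \<Rightarrow> real) set" where
  "Q t = cube (cc t)"

lemma Q_sets[measurable]: "Q t \<in> sets mu"
  unfolding Q_def by simp

lemma cc_inj: "cc t = cc t' \<Longrightarrow> t = t'"
proof (rule ccontr)
  assume eq: "cc t = cc t'" and ne: "t \<noteq> t'"
  have "\<exists>q::rat. (of_rat q < t) \<noteq> (of_rat q < t')"
  proof (cases "t < t'")
    case True
    then obtain r where r: "r \<in> \<rat>" "t < r" "r < t'" using Rats_dense_in_real by blast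
    then obtain q where "r = of_rat q" by (auto elim: Rats_cases)
    then show ?thesis using r by (intro exI[of _ q]) auto
  next
    case False
    then have "t' < t" using ne by simp
    then obtain r where r: "r \<in> \<rat>" "t' < r" "r < t" using Rats_dense_in_real by blast
    then obtain q where "r = of_rat q" by (auto elim: Rats_cases)
    then show ?thesis using r by (intro exI[of _ q]) auto
  qed
  then obtain q :: rat where q: "(of_rat q < t) \<noteq> (of_rat q < t')" by blast
  have "cc t (to_nat q) \<noteq> cc t' (to_nat q)" using q by (simp add: cc_def)
  then show False using eq by simp
qed

lemma Q_disj: "x \<in> Q t \<Longrightarrow> x \<in> Q t' \<Longrightarrow> t = t'"
proof -
  assume x: "x \<in> Q t" "x \<in> Q t'"
  have "cc t i = cc t' i" for i
  proof -
    have "x i \<in> {cc t i..cc t i + 1}" "x i \<in> {cc t' i..cc t' i + 1}"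
      using x by (auto simp: Q_def cube_def rect_def)
    then show ?thesis by (auto simp: cc_def split: if_splits)
  qed
  then show "t = t'" by (intro cc_inj) auto
qed

definition own :: "(nat \<Rightarrow> real) \<Rightarrow> real" where
  "own x = (THE t. x \<in> Q t)"

lemma own_eq: "x \<in> Q t \<Longrightarrow> own x = t"
  unfolding own_def using Q_disj by blast

definition ext :: "(real \<Rightarrow> real) \<Rightarrow> real \<Rightarrow> real" where
  "ext H s = (if s \<in> {0..1} then H s else 0)"

definition T0 :: "(real \<Rightarrow> real \<Rightarrow> real) \<Rightarrow> (nat \<Rightarrow> real) \<Rightarrow> real" where
  "T0 G x = (if \<exists>t. x \<in> Q t then ext (G (own x)) (x 0 - cc (own x) 0) else 0)"

lemma T0_Q: "x \<in> Q t \<Longrightarrow> T0 G x = ext (G t) (x 0 - cc t 0)"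
  unfolding T0_def using own_eq by auto

lemma T0_out: "(\<And>t. x \<notin> Q t) \<Longrightarrow> T0 G x = 0"
  unfolding T0_def by auto

lemma T0_phi: "s \<in> {0..1} \<Longrightarrow> \<omega> \<in> space PP \<Longrightarrow> T0 G (phi (cc t) s \<omega>) = G t s"
  using phi_cube[of s \<omega> "cc t"] by (simp add: T0_Q Q_def phi_0 ext_def)

lemma T0_lin: "T0 (\<lambda>t s. a * G t s + b * H t s) x = a * T0 G x + b * T0 H x"
  unfolding T0_def ext_def by auto

lemma ext_meas[measurable]:
  assumes "H \<in> borel_measurable I01"
  shows "ext H \<in> borel_measurable borel"
proof -
  have "(\<lambda>x. indicator {0..1} x *\<^sub>R H x) \<in> borel_measurable lborel"
    using assms unfolding I01_def by (subst (asm) borel_measurable_restrict_space_iff) auto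
  moreover have "(\<lambda>x. indicator {0..1} x *\<^sub>R H x) = ext H"
    by (auto simp: ext_def fun_eq_iff)
  ultimately show ?thesis by simp
qed

lemma T0_meas:
  assumes K: "countable K"
    and G0: "\<And>t s. t \<notin> K \<Longrightarrow> s \<in> {0..1} \<Longrightarrow> G t s = 0"
    and Gm: "\<And>t. t \<in> K \<Longrightarrow> G t \<in> borel_measurable I01"
  shows "T0 G \<in> borel_measurable mu"
proof (rule measurable_piecewise_restrict[where C="insert (UNIV - (\<Union>t\<in>K. Q t)) (Q ` K)"])
  show "countable (insert (UNIV - (\<Union>t\<in>K. Q t)) (Q ` K))" using K by simp
  have U: "(\<Union>t\<in>K. Q t) \<in> sets mu" using K by (intro sets.countable_UN') auto
  show "\<Omega> \<inter> space mu \<in> sets mu" if "\<Omega> \<in> insert (UNIV - (\<Union>t\<in>K. Q t)) (Q ` K)" for \<Omega>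
    using that U by (auto simp: space_mu intro!: sets.compl_sets[of _ mu, simplified space_mu])
  show "space mu \<subseteq> \<Union> (insert (UNIV - (\<Union>t\<in>K. Q t)) (Q ` K))" by auto
  fix \<Omega> assume "\<Omega> \<in> insert (UNIV - (\<Union>t\<in>K. Q t)) (Q ` K)"
  then consider "\<Omega> = UNIV - (\<Union>t\<in>K. Q t)" | t where "t \<in> K" "\<Omega> = Q t" by auto
  then show "T0 G \<in> borel_measurable (restrict_space mu \<Omega>)"
  proof cases
    case 1
    have "T0 G x = 0" if "x \<in> space (restrict_space mu \<Omega>)" for x
    proof (cases "\<exists>t. x \<in> Q t")
      case True
      then obtain t where t: "x \<in> Q t" by auto
      then have "t \<notin> K" using that 1 by (auto simp: space_restrict_space)
      then show ?thesis using G0 t by (simp add: T0_Q ext_def)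
    qed (auto intro: T0_out)
    then show ?thesis by (subst measurable_cong[where g="\<lambda>_. 0"]) auto
  next
    case 2
    have m: "(\<lambda>x. ext (G t) (x 0 - cc t 0)) \<in> borel_measurable mu"
      using Gm[OF 2(1)] by measurable
    have "T0 G x = ext (G t) (x 0 - cc t 0)" if "x \<in> space (restrict_space mu \<Omega>)" for x
      using that 2 by (auto simp: space_restrict_space T0_Q)
    then show ?thesis
      by (subst measurable_cong[where g="\<lambda>x. ext (G t) (x 0 - cc t 0)"]) (auto intro: measurable_restrict_space1 m)
  qed
qed

lemma L5:
  assumes m[measurable]: "T0 G \<in> borel_measurable mu"
  shows "(\<integral>\<^sup>+x. indicator (Q t) x * ennreal (\<bar>T0 G x\<bar> powr p) \<partial>mu) = (\<integral>\<^sup>+s. ennreal (\<bar>G t s\<bar> powr p) \<partial>I01)"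
proof -
  interpret PP: prob_space PP by (rule PP_prob)
  have "(\<integral>\<^sup>+x. indicator (Q t) x * ennreal (\<bar>T0 G x\<bar> powr p) \<partial>mu)
      = (\<integral>\<^sup>+s. \<integral>\<^sup>+\<omega>. ennreal (\<bar>T0 G (phi (cc t) s \<omega>)\<bar> powr p) \<partial>PP \<partial>I01)"
    unfolding Q_def by (rule KEY) measurable
  also have "\<dots> = (\<integral>\<^sup>+s. \<integral>\<^sup>+\<omega>. ennreal (\<bar>G t s\<bar> powr p) \<partial>PP \<partial>I01)"
    by (intro nn_integral_cong) (simp add: T0_phi space_I01)
  also have "\<dots> = (\<integral>\<^sup>+s. ennreal (\<bar>G t s\<bar> powr p) \<partial>I01)"
    by (simp add: PP.emeasure_space_1)
  finally show ?thesis .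
qed

lemma L6:
  assumes K: "countable K"
    and G0: "\<And>t s. t \<notin> K \<Longrightarrow> s \<in> {0..1} \<Longrightarrow> G t s = 0"
    and Gm: "\<And>t. t \<in> K \<Longrightarrow> G t \<in> borel_measurable I01"
  shows "(\<integral>\<^sup>+x. ennreal (\<bar>T0 G x\<bar> powr p) \<partial>mu)
    = (\<integral>\<^sup>+t. (\<integral>\<^sup>+s. ennreal (\<bar>G t s\<bar> powr p) \<partial>I01) \<partial>count_space K)"
proof -
  have m[measurable]: "T0 G \<in> borel_measurable mu" using T0_meas[OF K G0 Gm] by auto
  have pw: "ennreal (\<bar>T0 G x\<bar> powr p) = (\<integral>\<^sup>+t. indicator (Q t) x * ennreal (\<bar>T0 G x\<bar> powr p) \<partial>count_space K)" for x
  proof (cases "\<exists>t\<in>K. x \<in> Q t")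
    case True
    then obtain t0 where t0: "t0 \<in> K" "x \<in> Q t0" by auto
    define v where "v = ennreal (\<bar>T0 G x\<bar> powr p)"
    have ind: "indicator (Q t) x * v = v * indicator {t0} t" for t
    proof (cases "t = t0")
      case True then show ?thesis using t0 by simp
    next
      case False
      then have "x \<notin> Q t" using Q_disj[of x t0 t] t0 by auto
      then show ?thesis using False by simp
    qed
    have "(\<integral>\<^sup>+t. indicator (Q t) x * v \<partial>count_space K) = (\<integral>\<^sup>+t. v * indicator {t0} t \<partial>count_space K)"
      by (simp only: ind)
    also have "\<dots> = v * emeasure (count_space K) {t0}"
      using t0 by (intro nn_integral_cmult_indicator) simp
    also have "\<dots> = v" using t0 by simp
    finally show ?thesis unfolding v_def by simp
  next
    case False
    have "T0 G x = 0"
    proof (cases "\<exists>t. x \<in> Q t")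
      case True
      then obtain t0 where t0: "x \<in> Q t0" by auto
      then have "t0 \<notin> K" using False by auto
      moreover have "x 0 \<in> {cc t0 0..cc t0 0 + 1}" using t0 unfolding Q_def cube_def rect_def by blast
      then have "x 0 - cc t0 0 \<in> {0..1}" by auto
      ultimately show ?thesis using G0 t0 by (simp add: T0_Q ext_def)
    next
      case False then show ?thesis by (intro T0_out) auto
    qed
    moreover have "(\<integral>\<^sup>+t. indicator (Q t) x * ennreal (\<bar>T0 G x\<bar> powr p) \<partial>count_space K) = (\<integral>\<^sup>+t. 0 \<partial>count_space K)"
      using False by (intro nn_integral_cong) auto
    ultimately show ?thesis by simp
  qed
  have "(\<integral>\<^sup>+x. ennreal (\<bar>T0 G x\<bar> powr p) \<partial>mu)
      = (\<integral>\<^sup>+x. \<integral>\<^sup>+t. indicator (Q t) x * ennreal (\<bar>T0 G x\<bar> powr p) \<partial>count_space K \<partial>mu)"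
    by (subst pw) simp
  also have "\<dots> = (\<integral>\<^sup>+t. \<integral>\<^sup>+x. indicator (Q t) x * ennreal (\<bar>T0 G x\<bar> powr p) \<partial>mu \<partial>count_space K)"
    using K by (intro nn_integral_count_space_nn_integral) auto
  also have "\<dots> = (\<integral>\<^sup>+t. (\<integral>\<^sup>+s. ennreal (\<bar>G t s\<bar> powr p) \<partial>I01) \<partial>count_space K)"
    by (intro nn_integral_cong L5 m)
  finally show ?thesis .
qed

lemma L7:
  assumes K: "countable K"
    and G0: "\<And>t s. t \<notin> K \<Longrightarrow> s \<in> {0..1} \<Longrightarrow> G t s = 0"
    and G0': "\<And>t s. t \<notin> K \<Longrightarrow> s \<in> {0..1} \<Longrightarrow> G' t s = 0"
    and Gm: "\<And>t. t \<in> K \<Longrightarrow> G t \<in> borel_measurable I01"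
    and Gm': "\<And>t. t \<in> K \<Longrightarrow> G' t \<in> borel_measurable I01"
    and ae: "\<And>t. t \<in> K \<Longrightarrow> AE s in I01. G t s = G' t s"
  shows "AE x in mu. T0 G x = T0 G' x"
proof -
  define D where "D t s = 1 * G t s + (-1) * G' t s" for t s
  have TD: "T0 D x = T0 G x - T0 G' x" for x
    unfolding D_def T0_lin by simp
  have D0: "D t s = 0" if "t \<notin> K" "s \<in> {0..1}" for t s using G0 G0' that by (simp add: D_def)
  have Dm: "D t \<in> borel_measurable I01" if "t \<in> K" for t
    using Gm[OF that] Gm'[OF that] unfolding D_def by measurable
  have m[measurable]: "T0 D \<in> borel_measurable mu" using T0_meas[OF K D0 Dm] by auto
  have "(\<integral>\<^sup>+x. ennreal (\<bar>T0 D x\<bar> powr 1) \<partial>mu) = (\<integral>\<^sup>+t. (\<integral>\<^sup>+s. ennreal (\<bar>D t s\<bar> powr 1) \<partial>I01) \<partial>count_space K)"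
    using L6[OF K D0 Dm] .
  also have "\<dots> = (\<integral>\<^sup>+t. 0 \<partial>count_space K)"
  proof (intro nn_integral_cong)
    fix t assume "t \<in> space (count_space K)"
    then have "t \<in> K" by simp
    have aeD: "AE s in I01. ennreal (\<bar>D t s\<bar> powr 1) = 0"
      using ae[OF \<open>t \<in> K\<close>] by eventually_elim (simp add: D_def)
    then show "(\<integral>\<^sup>+s. ennreal (\<bar>D t s\<bar> powr 1) \<partial>I01) = 0"
      by (subst nn_integral_cong_AE[OF aeD]) simp
  qed
  finally have "(\<integral>\<^sup>+x. ennreal (\<bar>T0 D x\<bar> powr 1) \<partial>mu) = 0" by simp
  then have "AE x in mu. ennreal (\<bar>T0 D x\<bar> powr 1) = 0"
    by (subst (asm) nn_integral_0_iff_AE) auto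
  then show ?thesis by eventually_elim (simp add: TD)
qed

definition hP :: "((nat \<Rightarrow> real) \<Rightarrow> real) \<Rightarrow> real \<Rightarrow> real \<Rightarrow> real" where
  "hP f t s = (\<integral>\<omega>. f (phi (cc t) s \<omega>) \<partial>PP)"

lemma F_meas:
  assumes f[measurable]: "f \<in> borel_measurable mu"
  shows "(\<lambda>(s, \<omega>). f (phi c s \<omega>)) \<in> borel_measurable (I01 \<Otimes>\<^sub>M PP)"
proof -
  have "(\<lambda>z. f ((\<lambda>(s, \<omega>). phi c s \<omega>) z)) \<in> borel_measurable (I01 \<Otimes>\<^sub>M PP)"
    using phi_meas[of c] f by (rule measurable_compose)
  then show ?thesis by (simp add: case_prod_beta')
qed

lemma F_meas2:
  assumes f[measurable]: "f \<in> borel_measurable mu" and s: "s \<in> space I01"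
  shows "(\<lambda>\<omega>. f (phi c s \<omega>)) \<in> borel_measurable PP"
  using measurable_Pair2[OF F_meas[OF f, of c] s] by simp

lemma hP_meas:
  assumes f[measurable]: "f \<in> borel_measurable mu"
  shows "hP f t \<in> borel_measurable I01"
  unfolding hP_def
  using F_meas[OF f, of "cc t"]
  by (intro sigma_finite_measure.borel_measurable_lebesgue_integral[OF sf_PP]) (simp add: case_prod_beta')

lemma hP_bound:
  assumes f[measurable]: "f \<in> borel_measurable mu" and p: "p \<ge> 1"
  shows "(\<integral>\<^sup>+s. ennreal (\<bar>hP f t s\<bar> powr p) \<partial>I01) \<le> (\<integral>\<^sup>+x. indicator (Q t) x * ennreal (\<bar>f x\<bar> powr p) \<partial>mu)"
proof -
  interpret PP: prob_space PP by (rule PP_prob)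
  have "(\<integral>\<^sup>+s. ennreal (\<bar>hP f t s\<bar> powr p) \<partial>I01) \<le> (\<integral>\<^sup>+s. \<integral>\<^sup>+\<omega>. ennreal (\<bar>f (phi (cc t) s \<omega>)\<bar> powr p) \<partial>PP \<partial>I01)"
    unfolding hP_def by (intro nn_integral_mono PP.jensen_nn p F_meas2 f)
  also have "\<dots> = (\<integral>\<^sup>+x. indicator (Q t) x * ennreal (\<bar>f x\<bar> powr p) \<partial>mu)"
    unfolding Q_def by (rule KEY[symmetric]) measurable
  finally show ?thesis .
qed

lemma nn_fin_Lp:
  assumes "f \<in> Lp M p"
  shows "(\<integral>\<^sup>+x. ennreal (\<bar>f x\<bar> powr p) \<partial>M) < \<infinity>"
proof -
  have "integrable M (\<lambda>x. \<bar>f x\<bar> powr p)" using assms by (simp add: Lp_def)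
  then have "(\<integral>\<^sup>+x. ennreal (\<bar>f x\<bar> powr p) \<partial>M) = ennreal (\<integral>x. \<bar>f x\<bar> powr p \<partial>M)"
    by (intro nn_integral_eq_integral) auto
  then show ?thesis by simp
qed

lemma Q_nn_le: "(\<integral>\<^sup>+x. indicator (Q t) x * ennreal (\<bar>f x\<bar> powr p) \<partial>mu) \<le> (\<integral>\<^sup>+x. ennreal (\<bar>f x\<bar> powr p) \<partial>mu)"
  by (intro nn_integral_mono) (auto split: split_indicator)

lemma hP_AE_integrable:
  assumes f[measurable]: "f \<in> borel_measurable mu" and p: "p \<ge> 1"
    and fin: "(\<integral>\<^sup>+x. ennreal (\<bar>f x\<bar> powr p) \<partial>mu) < \<infinity>"
  shows "AE s in I01. integrable PP (\<lambda>\<omega>. f (phi (cc t) s \<omega>))"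
proof -
  interpret PP: prob_space PP by (rule PP_prob)
  have m: "(\<lambda>s. \<integral>\<^sup>+\<omega>. ennreal (\<bar>f (phi (cc t) s \<omega>)\<bar> powr p) \<partial>PP) \<in> borel_measurable I01"
    using F_meas[OF f, of "cc t"]
    by (intro sigma_finite_measure.borel_measurable_nn_integral[OF sf_PP]) (simp add: case_prod_beta')
  have "(\<integral>\<^sup>+s. \<integral>\<^sup>+\<omega>. ennreal (\<bar>f (phi (cc t) s \<omega>)\<bar> powr p) \<partial>PP \<partial>I01) = (\<integral>\<^sup>+x. indicator (Q t) x * ennreal (\<bar>f x\<bar> powr p) \<partial>mu)"
    unfolding Q_def by (rule KEY[symmetric]) measurable
  also have "\<dots> < \<infinity>" using Q_nn_le fin by (rule le_less_trans)
  finally have "AE s in I01. (\<integral>\<^sup>+\<omega>. ennreal (\<bar>f (phi (cc t) s \<omega>)\<bar> powr p) \<partial>PP) \<noteq> \<infinity>"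
    using m by (intro nn_integral_PInf_AE) auto
  then show ?thesis
  proof (rule AE_mp[OF _ AE_I2], intro impI)
    fix s assume s: "s \<in> space I01" and "(\<integral>\<^sup>+\<omega>. ennreal (\<bar>f (phi (cc t) s \<omega>)\<bar> powr p) \<partial>PP) \<noteq> \<infinity>"
    then have "(\<integral>\<^sup>+\<omega>. ennreal (\<bar>f (phi (cc t) s \<omega>)\<bar> powr p) \<partial>PP) < \<infinity>" by (simp add: less_top)
    then show "integrable PP (\<lambda>\<omega>. f (phi (cc t) s \<omega>))"
      using PP.integrable_of_powr[OF p F_meas2[OF f s]] by simp
  qed
qed

lemma hP_lin:
  assumes f[measurable]: "f \<in> borel_measurable mu" and f'[measurable]: "f' \<in> borel_measurable mu" and p: "p \<ge> 1"
    and fin: "(\<integral>\<^sup>+x. ennreal (\<bar>f x\<bar> powr p) \<partial>mu) < \<infinity>"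
    and fin': "(\<integral>\<^sup>+x. ennreal (\<bar>f' x\<bar> powr p) \<partial>mu) < \<infinity>"
  shows "AE s in I01. hP (\<lambda>x. a * f x + b * f' x) t s = a * hP f t s + b * hP f' t s"
  using hP_AE_integrable[OF f p fin, of t] hP_AE_integrable[OF f' p fin', of t]
  by eventually_elim (simp add: hP_def)

lemma hP_T0: "s \<in> {0..1} \<Longrightarrow> hP (T0 G) t s = G t s"
proof -
  interpret PP: prob_space PP by (rule PP_prob)
  assume s: "s \<in> {0..1}"
  have "hP (T0 G) t s = (\<integral>\<omega>. G t s \<partial>PP)"
    unfolding hP_def using s by (intro Bochner_Integration.integral_cong) (auto simp: T0_phi)
  also have "\<dots> = G t s" by (simp add: PP.prob_space)
  finally show ?thesis .
qed

definition clean :: "(real \<Rightarrow> real \<Rightarrow> real) \<Rightarrow> real \<Rightarrow> real \<Rightarrow> real" where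
  "clean g t = (if AE s in I01. g t s = 0 then (\<lambda>_. 0) else g t)"

definition Kof :: "(real \<Rightarrow> real \<Rightarrow> real) \<Rightarrow> real set" where
  "Kof g = {t. \<not> (AE s in I01. g t s = 0)}"

definition Tmap :: "(real \<Rightarrow> real \<Rightarrow> real) \<Rightarrow> (nat \<Rightarrow> real) \<Rightarrow> real" where
  "Tmap g = T0 (clean g)"

lemma clean_AE: "AE s in I01. clean g t s = g t s"
proof (cases "AE s in I01. g t s = 0")
  case True
  then show ?thesis by eventually_elim (simp add: clean_def True)
next
  case False
  then show ?thesis by (simp add: clean_def)
qed

lemma clean_out: "t \<notin> Kof g \<Longrightarrow> clean g t s = 0"
  by (simp add: clean_def Kof_def)

lemma clean_meas: "g t \<in> borel_measurable I01 \<Longrightarrow> clean g t \<in> borel_measurable I01"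
  by (simp add: clean_def)

lemma Tmap_meas:
  assumes "countable (Kof g)" "\<And>t. g t \<in> borel_measurable I01"
  shows "Tmap g \<in> borel_measurable mu"
  unfolding Tmap_def using assms clean_out clean_meas by (intro T0_meas[where K="Kof g"]) auto

lemma Tmap_nn:
  assumes "countable (Kof g)" "\<And>t. g t \<in> borel_measurable I01"
  shows "(\<integral>\<^sup>+x. ennreal (\<bar>Tmap g x\<bar> powr p) \<partial>mu)
    = (\<integral>\<^sup>+t. (\<integral>\<^sup>+s. ennreal (\<bar>g t s\<bar> powr p) \<partial>I01) \<partial>count_space (Kof g))"
proof -
  have "(\<integral>\<^sup>+x. ennreal (\<bar>Tmap g x\<bar> powr p) \<partial>mu)
    = (\<integral>\<^sup>+t. (\<integral>\<^sup>+s. ennreal (\<bar>clean g t s\<bar> powr p) \<partial>I01) \<partial>count_space (Kof g))"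
    unfolding Tmap_def using assms clean_out clean_meas by (intro L6) auto
  also have "\<dots> = (\<integral>\<^sup>+t. (\<integral>\<^sup>+s. ennreal (\<bar>g t s\<bar> powr p) \<partial>I01) \<partial>count_space (Kof g))"
  proof -
    have "(\<integral>\<^sup>+s. ennreal (\<bar>clean g t s\<bar> powr p) \<partial>I01) = (\<integral>\<^sup>+s. ennreal (\<bar>g t s\<bar> powr p) \<partial>I01)" for t
    proof (rule nn_integral_cong_AE)
      show "AE s in I01. ennreal (\<bar>clean g t s\<bar> powr p) = ennreal (\<bar>g t s\<bar> powr p)"
        using clean_AE[of g t] by eventually_elim simp
    qed
    then show ?thesis by simp
  qed
  finally show ?thesis .
qed

lemma Kof_cong: "(\<And>t. AE s in I01. g t s = g' t s) \<Longrightarrow> Kof g = Kof g'"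
proof -
  assume ae: "\<And>t. AE s in I01. g t s = g' t s"
  have "(AE s in I01. g t s = 0) \<longleftrightarrow> (AE s in I01. g' t s = 0)" for t
  proof
    assume "AE s in I01. g t s = 0" then show "AE s in I01. g' t s = 0"
      using ae[of t] by eventually_elim simp
  next
    assume "AE s in I01. g' t s = 0" then show "AE s in I01. g t s = 0"
      using ae[of t] by eventually_elim simp
  qed
  then show ?thesis unfolding Kof_def by simp
qed

lemma Tmap_AE:
  assumes K: "countable (Kof g)" and m: "\<And>t. g t \<in> borel_measurable I01" "\<And>t. g' t \<in> borel_measurable I01"
    and ae: "\<And>t. AE s in I01. g t s = g' t s"
  shows "AE x in mu. Tmap g x = Tmap g' x"
proof -
  have KK: "Kof g' = Kof g" using Kof_cong[OF ae] by simp
  show ?thesis unfolding Tmap_def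
  proof (rule L7[where K="Kof g"])
    fix t
    show "AE s in I01. clean g t s = clean g' t s"
      using clean_AE[of g t] clean_AE[of g' t] ae[of t] by eventually_elim simp
  qed (use K m clean_out clean_meas KK in auto)
qed

lemma Kof_lin: "Kof (\<lambda>t s. a * g t s + b * h t s) \<subseteq> Kof g \<union> Kof h"
proof
  fix t assume t: "t \<in> Kof (\<lambda>t s. a * g t s + b * h t s)"
  show "t \<in> Kof g \<union> Kof h"
  proof (rule ccontr)
    assume "t \<notin> Kof g \<union> Kof h"
    then have "AE s in I01. g t s = 0" "AE s in I01. h t s = 0" by (auto simp: Kof_def)
    then have "AE s in I01. a * g t s + b * h t s = 0" by eventually_elim simp
    then show False using t by (simp add: Kof_def)
  qed
qed

lemma Tmap_lin:
  assumes K: "countable (Kof g)" "countable (Kof h)"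
    and m: "\<And>t. g t \<in> borel_measurable I01" "\<And>t. h t \<in> borel_measurable I01"
  shows "AE x in mu. Tmap (\<lambda>t s. a * g t s + b * h t s) x = a * Tmap g x + b * Tmap h x"
proof -
  let ?u = "\<lambda>t s. a * g t s + b * h t s"
  have "AE x in mu. T0 (clean ?u) x = T0 (\<lambda>t s. a * clean g t s + b * clean h t s) x"
  proof (rule L7[where K="Kof g \<union> Kof h"])
    show "countable (Kof g \<union> Kof h)" using K by simp
    fix t
    show "t \<notin> Kof g \<union> Kof h \<Longrightarrow> s \<in> {0..1} \<Longrightarrow> clean ?u t s = 0" for s
      using Kof_lin[of a g b h] by (intro clean_out) auto
    show "t \<notin> Kof g \<union> Kof h \<Longrightarrow> s \<in> {0..1} \<Longrightarrow> a * clean g t s + b * clean h t s = 0" for s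
      by (simp add: clean_out)
    have um: "?u t \<in> borel_measurable I01" using m by measurable
    show "clean ?u t \<in> borel_measurable I01" using um by (rule clean_meas)
    show "(\<lambda>s. a * clean g t s + b * clean h t s) \<in> borel_measurable I01"
      using clean_meas[OF m(1)] clean_meas[OF m(2)] by measurable
    show "AE s in I01. clean ?u t s = a * clean g t s + b * clean h t s"
      using clean_AE[of ?u t] clean_AE[of g t] clean_AE[of h t] by eventually_elim simp
  qed
  then show ?thesis unfolding Tmap_def T0_lin .
qed

lemma powr_Lp_norm:
  assumes "p \<ge> 1"
  shows "Lp_norm M p f powr p = (\<integral>x. \<bar>f x\<bar> powr p \<partial>M)"
proof -
  have "(\<integral>x. \<bar>f x\<bar> powr p \<partial>M) \<ge> 0" by simp
  then show ?thesis using assms unfolding Lp_norm_def by (simp add: powr_powr)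
qed

lemma nn_Lp:
  assumes "f \<in> Lp M p"
  shows "(\<integral>\<^sup>+x. ennreal (\<bar>f x\<bar> powr p) \<partial>M) = ennreal (\<integral>x. \<bar>f x\<bar> powr p \<partial>M)"
  using assms by (intro nn_integral_eq_integral) (auto simp: Lp_def)

lemma Lp_zero_iff:
  assumes "f \<in> Lp M p" "p \<ge> 1"
  shows "(\<integral>x. \<bar>f x\<bar> powr p \<partial>M) = 0 \<longleftrightarrow> (AE x in M. f x = 0)"
proof -
  have "(\<integral>x. \<bar>f x\<bar> powr p \<partial>M) = 0 \<longleftrightarrow> (AE x in M. \<bar>f x\<bar> powr p = 0)"
    using assms by (intro integral_nonneg_eq_0_iff_AE) (auto simp: Lp_def)
  also have "\<dots> \<longleftrightarrow> (AE x in M. f x = 0)" by simp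
  finally show ?thesis .
qed

lemma Kof_iff:
  assumes g: "g \<in> lp_sum I01 p" and p: "p \<ge> 1"
  shows "t \<in> Kof g \<longleftrightarrow> Lp_norm I01 p (g t) powr p \<noteq> 0"
  using Lp_zero_iff[of "g t" I01 p] g p by (simp add: Kof_def powr_Lp_norm lp_sum_def)

lemma countable_Kof:
  assumes g: "g \<in> lp_sum I01 p" and p: "p \<ge> 1"
  shows "countable (Kof g)"
proof -
  have "countable {t \<in> UNIV. Lp_norm I01 p (g t) powr p \<noteq> 0}"
    using g by (intro summable_countable_real) (simp add: lp_sum_def)
  moreover have "Kof g = {t \<in> UNIV. Lp_norm I01 p (g t) powr p \<noteq> 0}"
    using Kof_iff[OF g p] by auto
  ultimately show ?thesis by simp
qed

lemma lp_meas: "g \<in> lp_sum M p \<Longrightarrow> g t \<in> borel_measurable M"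
  by (simp add: lp_sum_def Lp_def)

lemma count_space_infsum:
  fixes \<phi> :: "'a \<Rightarrow> real"
  assumes s: "\<phi> summable_on UNIV" and nn: "\<And>t. \<phi> t \<ge> 0" and z: "\<And>t. t \<notin> K \<Longrightarrow> \<phi> t = 0"
  shows "(\<integral>\<^sup>+t. ennreal (\<phi> t) \<partial>count_space K) = ennreal (infsum \<phi> UNIV)"
proof -
  have sK: "\<phi> summable_on K" using s by (rule summable_on_subset_banach) simp
  then have "Infinite_Sum.abs_summable_on \<phi> K"
    using summable_on_iff_abs_summable_on_real by blast
  then have aK: "Infinite_Set_Sum.abs_summable_on \<phi> K" using abs_summable_equivalent by blast
  have "(\<integral>\<^sup>+t. ennreal (\<phi> t) \<partial>count_space K) = ennreal (infsetsum \<phi> K)"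
    using aK nn by (intro nn_integral_conv_infsetsum) auto
  also have "infsetsum \<phi> K = infsum \<phi> K" using aK by (rule infsetsum_infsum)
  also have "infsum \<phi> K = infsum \<phi> UNIV"
    using z by (intro infsum_cong_neutral) auto
  finally show ?thesis .
qed

lemma T_iso:
  assumes g: "g \<in> lp_sum I01 p" and p: "p \<ge> 1"
  shows "Tmap g \<in> Lp mu p" "(\<integral>x. \<bar>Tmap g x\<bar> powr p \<partial>mu) = (\<Sum>\<^sub>\<infinity>t. Lp_norm I01 p (g t) powr p)"
    "Lp_norm mu p (Tmap g) = lp_sum_norm I01 p g"
proof -
  define \<phi> where "\<phi> t = Lp_norm I01 p (g t) powr p" for t
  have K: "countable (Kof g)" using countable_Kof[OF g p] .
  have m: "\<And>t. g t \<in> borel_measurable I01" using g by (rule lp_meas)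
  have Tm[measurable]: "Tmap g \<in> borel_measurable mu" using Tmap_meas[OF K m] .
  have gt: "g t \<in> Lp I01 p" for t using g by (simp add: lp_sum_def)
  have phi_nn: "\<phi> t \<ge> 0" for t by (simp add: \<phi>_def)
  have "(\<integral>\<^sup>+x. ennreal (\<bar>Tmap g x\<bar> powr p) \<partial>mu)
      = (\<integral>\<^sup>+t. (\<integral>\<^sup>+s. ennreal (\<bar>g t s\<bar> powr p) \<partial>I01) \<partial>count_space (Kof g))"
    using Tmap_nn[OF K m] .
  also have "\<dots> = (\<integral>\<^sup>+t. ennreal (\<phi> t) \<partial>count_space (Kof g))"
    using gt p by (simp add: nn_Lp \<phi>_def powr_Lp_norm)
  also have "\<dots> = ennreal (infsum \<phi> UNIV)"
  proof (rule count_space_infsum)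
    show "\<phi> summable_on UNIV" using g unfolding \<phi>_def[abs_def] by (simp add: lp_sum_def)
    show "\<And>t. 0 \<le> \<phi> t" by (rule phi_nn)
    show "\<And>t. t \<notin> Kof g \<Longrightarrow> \<phi> t = 0" using Kof_iff[OF g p] by (simp add: \<phi>_def)
  qed
  finally have nn: "(\<integral>\<^sup>+x. ennreal (\<bar>Tmap g x\<bar> powr p) \<partial>mu) = ennreal (infsum \<phi> UNIV)" .
  have int: "integrable mu (\<lambda>x. \<bar>Tmap g x\<bar> powr p)"
    using nn by (intro integrableI_nn_integral_finite) auto
  then show "Tmap g \<in> Lp mu p" by (simp add: Lp_def)
  have "(\<integral>x. \<bar>Tmap g x\<bar> powr p \<partial>mu) = enn2real (\<integral>\<^sup>+x. ennreal (\<bar>Tmap g x\<bar> powr p) \<partial>mu)"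
    by (intro integral_eq_nn_integral) auto
  also have "\<dots> = infsum \<phi> UNIV" using nn phi_nn by (simp add: infsum_nonneg)
  finally show I: "(\<integral>x. \<bar>Tmap g x\<bar> powr p \<partial>mu) = (\<Sum>\<^sub>\<infinity>t. Lp_norm I01 p (g t) powr p)"
    unfolding \<phi>_def[abs_def] .
  show "Lp_norm mu p (Tmap g) = lp_sum_norm I01 p g"
    unfolding Lp_norm_def lp_sum_norm_def I ..
qed

lemma sum_ind_Q:
  assumes "finite F"
  shows "(\<Sum>t\<in>F. indicator (Q t) x * v) \<le> (v::ennreal)"
proof (cases "\<exists>t0\<in>F. x \<in> Q t0")
  case True
  then obtain t0 where t0: "t0 \<in> F" "x \<in> Q t0" by auto
  have "(\<Sum>t\<in>F. indicator (Q t) x * v) = indicator (Q t0) x * v + (\<Sum>t\<in>F - {t0}. indicator (Q t) x * v)"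
    using assms t0(1) by (rule sum.remove)
  also have "(\<Sum>t\<in>F - {t0}. indicator (Q t) x * v) = (\<Sum>t\<in>F - {t0}. 0)"
  proof (rule sum.cong)
    fix t assume "t \<in> F - {t0}"
    then have "x \<notin> Q t" using Q_disj[of x t0 t] t0 by auto
    then show "indicator (Q t) x * v = 0" by simp
  qed simp
  finally show ?thesis using t0 by simp
next
  case False
  then have "(\<Sum>t\<in>F. indicator (Q t) x * v) = (\<Sum>t\<in>F. 0)"
    by (intro sum.cong) auto
  then show ?thesis by simp
qed

definition Pmap :: "((nat \<Rightarrow> real) \<Rightarrow> real) \<Rightarrow> (nat \<Rightarrow> real) \<Rightarrow> real" where
  "Pmap f = Tmap (hP f)"

lemma hP_lp:
  assumes f: "f \<in> Lp mu p" and p: "p \<ge> 1"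
  shows "hP f \<in> lp_sum I01 p" "(\<Sum>\<^sub>\<infinity>t. Lp_norm I01 p (hP f t) powr p) \<le> (\<integral>x. \<bar>f x\<bar> powr p \<partial>mu)"
proof -
  have fm[measurable]: "f \<in> borel_measurable mu" using f by (simp add: Lp_def)
  define \<psi> where "\<psi> t = (\<integral>\<^sup>+x. indicator (Q t) x * ennreal (\<bar>f x\<bar> powr p) \<partial>mu)" for t
  define N where "N = (\<integral>\<^sup>+x. ennreal (\<bar>f x\<bar> powr p) \<partial>mu)"
  have N: "N = ennreal (\<integral>x. \<bar>f x\<bar> powr p \<partial>mu)" unfolding N_def using f by (rule nn_Lp)
  have hb: "(\<integral>\<^sup>+s. ennreal (\<bar>hP f t s\<bar> powr p) \<partial>I01) \<le> \<psi> t" for t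
    unfolding \<psi>_def using fm p by (rule hP_bound)
  have \<psi>N: "\<psi> t \<le> N" for t unfolding \<psi>_def N_def by (rule Q_nn_le)
  have hm[measurable]: "hP f t \<in> borel_measurable I01" for t using fm by (rule hP_meas)
  have hLp: "hP f t \<in> Lp I01 p" for t
  proof -
    have "(\<integral>\<^sup>+s. ennreal (\<bar>hP f t s\<bar> powr p) \<partial>I01) < \<infinity>"
      using hb[of t] \<psi>N[of t] N by (auto simp: less_top[symmetric] top_unique)
    then have "integrable I01 (\<lambda>s. \<bar>hP f t s\<bar> powr p)"
      by (intro integrableI_bounded) auto
    then show ?thesis by (simp add: Lp_def)
  qed
  define \<phi> where "\<phi> t = Lp_norm I01 p (hP f t) powr p" for t
  have \<phi>nn: "\<phi> t \<ge> 0" for t by (simp add: \<phi>_def)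
  have \<phi>\<psi>: "ennreal (\<phi> t) \<le> \<psi> t" for t
    using hb[of t] nn_Lp[OF hLp[of t]] p by (simp add: \<phi>_def powr_Lp_norm)
  have fs: "sum \<phi> F \<le> (\<integral>x. \<bar>f x\<bar> powr p \<partial>mu)" if "finite F" for F
  proof -
    have "ennreal (sum \<phi> F) = (\<Sum>t\<in>F. ennreal (\<phi> t))" using \<phi>nn by simp
    also have "\<dots> \<le> (\<Sum>t\<in>F. \<psi> t)" by (intro sum_mono \<phi>\<psi>)
    also have "\<dots> = (\<integral>\<^sup>+x. (\<Sum>t\<in>F. indicator (Q t) x * ennreal (\<bar>f x\<bar> powr p)) \<partial>mu)"
      unfolding \<psi>_def by (intro nn_integral_sum[symmetric]) measurable
    also have "\<dots> \<le> N"
      unfolding N_def using that by (intro nn_integral_mono sum_ind_Q)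
    finally show ?thesis using N by simp
  qed
  have sm: "\<phi> summable_on UNIV"
  proof (rule nonneg_bdd_above_summable_on)
    show "bdd_above (sum \<phi> ` {F. F \<subseteq> UNIV \<and> finite F})"
      using fs by (intro bdd_aboveI2[where M="\<integral>x. \<bar>f x\<bar> powr p \<partial>mu"]) auto
  qed (rule \<phi>nn)
  show "hP f \<in> lp_sum I01 p"
    using hLp sm unfolding lp_sum_def \<phi>_def[abs_def] by simp
  have "infsum \<phi> UNIV \<le> (\<integral>x. \<bar>f x\<bar> powr p \<partial>mu)"
    using sm fs by (rule infsum_le_finite_sums)
  then show "(\<Sum>\<^sub>\<infinity>t. Lp_norm I01 p (hP f t) powr p) \<le> (\<integral>x. \<bar>f x\<bar> powr p \<partial>mu)"
    unfolding \<phi>_def[abs_def] .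
qed

lemma P_bound:
  assumes f: "f \<in> Lp mu p" and p: "p \<ge> 1"
  shows "Pmap f \<in> Lp mu p" "Lp_norm mu p (Pmap f) \<le> 1 * Lp_norm mu p f"
proof -
  note h = hP_lp[OF f p]
  show "Pmap f \<in> Lp mu p" unfolding Pmap_def using T_iso(1)[OF h(1) p] .
  have "Lp_norm mu p (Pmap f) = (\<Sum>\<^sub>\<infinity>t. Lp_norm I01 p (hP f t) powr p) powr (1 / p)"
    unfolding Pmap_def T_iso(3)[OF h(1) p] lp_sum_norm_def ..
  also have "\<dots> \<le> (\<integral>x. \<bar>f x\<bar> powr p \<partial>mu) powr (1 / p)"
    using h(2) p by (intro powr_mono2) (auto intro!: infsum_nonneg)
  finally show "Lp_norm mu p (Pmap f) \<le> 1 * Lp_norm mu p f" by (simp add: Lp_norm_def)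
qed

theorem corollary3p8:
  fixes p :: real
  assumes "1 \<le> p"
  shows "\<exists>(T :: (real \<Rightarrow> real \<Rightarrow> real) \<Rightarrow> (nat \<Rightarrow> real) \<Rightarrow> real)
            (P :: ((nat \<Rightarrow> real) \<Rightarrow> real) \<Rightarrow> (nat \<Rightarrow> real) \<Rightarrow> real) (C :: real).
     (\<forall>g \<in> lp_sum I01 p. T g \<in> Lp mu p \<and> Lp_norm mu p (T g) = lp_sum_norm I01 p g)
   \<and> (\<forall>g \<in> lp_sum I01 p. \<forall>h \<in> lp_sum I01 p. \<forall>a b.
        AE x in mu. T (\<lambda>i t. a * g i t + b * h i t) x = a * T g x + b * T h x)
   \<and> (\<forall>f \<in> Lp mu p. P f \<in> Lp mu p \<and> Lp_norm mu p (P f) \<le> C * Lp_norm mu p f)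
   \<and> (\<forall>f \<in> Lp mu p. \<forall>f' \<in> Lp mu p. \<forall>a b.
        AE x in mu. P (\<lambda>y. a * f y + b * f' y) x = a * P f x + b * P f' x)
   \<and> (\<forall>f \<in> Lp mu p. \<exists>g \<in> lp_sum I01 p. AE x in mu. P f x = T g x)
   \<and> (\<forall>g \<in> lp_sum I01 p. AE x in mu. P (T g) x = T g x)"
proof -
  have p: "p \<ge> 1" using assms .
  have c1: "\<forall>g \<in> lp_sum I01 p. Tmap g \<in> Lp mu p \<and> Lp_norm mu p (Tmap g) = lp_sum_norm I01 p g"
    using T_iso[OF _ p] by blast
  have c2: "\<forall>g \<in> lp_sum I01 p. \<forall>h \<in> lp_sum I01 p. \<forall>a b.
        AE x in mu. Tmap (\<lambda>i t. a * g i t + b * h i t) x = a * Tmap g x + b * Tmap h x"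
  proof (intro ballI allI)
    fix g h :: "real \<Rightarrow> real \<Rightarrow> real" and a b :: real assume g: "g \<in> lp_sum I01 p" and h: "h \<in> lp_sum I01 p"
    show "AE x in mu. Tmap (\<lambda>i t. a * g i t + b * h i t) x = a * Tmap g x + b * Tmap h x"
      using countable_Kof[OF g p] countable_Kof[OF h p] lp_meas[OF g] lp_meas[OF h]
      by (intro Tmap_lin) auto
  qed
  have c3: "\<forall>f \<in> Lp mu p. Pmap f \<in> Lp mu p \<and> Lp_norm mu p (Pmap f) \<le> 1 * Lp_norm mu p f"
    using P_bound[OF _ p] by blast
  have c4: "\<forall>f \<in> Lp mu p. \<forall>f' \<in> Lp mu p. \<forall>a b.
        AE x in mu. Pmap (\<lambda>y. a * f y + b * f' y) x = a * Pmap f x + b * Pmap f' x"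
  proof (intro ballI allI)
    fix f f' :: "(nat \<Rightarrow> real) \<Rightarrow> real" and a b :: real assume f: "f \<in> Lp mu p" and f': "f' \<in> Lp mu p"
    have fm[measurable]: "f \<in> borel_measurable mu" using f by (simp add: Lp_def)
    have f'm[measurable]: "f' \<in> borel_measurable mu" using f' by (simp add: Lp_def)
    define u where "u y = a * f y + b * f' y" for y
    have um[measurable]: "u \<in> borel_measurable mu" unfolding u_def by measurable
    define w where "w t s = a * hP f t s + b * hP f' t s" for t s
    have hf: "hP f \<in> lp_sum I01 p" using hP_lp(1)[OF f p] .
    have hf': "hP f' \<in> lp_sum I01 p" using hP_lp(1)[OF f' p] .
    have Kw: "countable (Kof w)"
      using Kof_lin[of a "hP f" b "hP f'"] countable_Kof[OF hf p] countable_Kof[OF hf' p]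
      unfolding w_def[abs_def] by (blast intro: countable_subset)
    have wm: "w t \<in> borel_measurable I01" for t
      using hP_meas[OF fm, of t] hP_meas[OF f'm, of t] unfolding w_def by measurable
    have ae: "AE s in I01. w t s = hP u t s" for t
      using hP_lin[OF fm f'm p nn_fin_Lp[OF f] nn_fin_Lp[OF f'], of a b t]
      unfolding u_def[abs_def] w_def by eventually_elim simp
    have A1: "AE x in mu. Tmap w x = Tmap (hP u) x"
      using Kw wm hP_meas[OF um] ae by (intro Tmap_AE) auto
    have A2: "AE x in mu. Tmap w x = a * Tmap (hP f) x + b * Tmap (hP f') x"
      unfolding w_def[abs_def]
      using countable_Kof[OF hf p] countable_Kof[OF hf' p] lp_meas[OF hf] lp_meas[OF hf']
      by (intro Tmap_lin) auto
    from A1 A2 show "AE x in mu. Pmap (\<lambda>y. a * f y + b * f' y) x = a * Pmap f x + b * Pmap f' x"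
      unfolding Pmap_def u_def[symmetric] by eventually_elim simp
  qed
  have c5: "\<forall>f \<in> Lp mu p. \<exists>g \<in> lp_sum I01 p. AE x in mu. Pmap f x = Tmap g x"
  proof
    fix f assume f: "f \<in> Lp mu p"
    show "\<exists>g \<in> lp_sum I01 p. AE x in mu. Pmap f x = Tmap g x"
      using hP_lp(1)[OF f p] by (intro bexI[of _ "hP f"]) (auto simp: Pmap_def)
  qed
  have c6: "\<forall>g \<in> lp_sum I01 p. AE x in mu. Pmap (Tmap g) x = Tmap g x"
  proof
    fix g :: "real \<Rightarrow> real \<Rightarrow> real" assume g: "g \<in> lp_sum I01 p"
    have K: "countable (Kof g)" using countable_Kof[OF g p] .
    have m: "\<And>t. g t \<in> borel_measurable I01" using g by (rule lp_meas)
    have Tm: "Tmap g \<in> borel_measurable mu" using Tmap_meas[OF K m] .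
    have ae: "AE s in I01. g t s = hP (Tmap g) t s" for t
    proof -
      have "AE s in I01. hP (Tmap g) t s = clean g t s"
        by (rule AE_I2) (simp add: Tmap_def hP_T0 space_I01)
      then show ?thesis using clean_AE[of g t] by eventually_elim simp
    qed
    have "AE x in mu. Tmap g x = Tmap (hP (Tmap g)) x"
      using K m hP_meas[OF Tm] ae by (intro Tmap_AE) auto
    then show "AE x in mu. Pmap (Tmap g) x = Tmap g x"
      unfolding Pmap_def by eventually_elim simp
  qed
  show ?thesis
    apply (rule exI[of _ Tmap])
    apply (rule exI[of _ Pmap])
    apply (rule exI[of _ "1::real"])
    apply (intro conjI)
         apply (fact c1)
        apply (fact c2)
       apply (fact c3)
      apply (fact c4)
     apply (fact c5)
    apply (fact c6)
    done
qed

end
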